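(* Let $\mathbf{A}\in\mathbb{R}^{n\times d}$ be nonzero, and for $\ell\in[m]$ let $\mathbf{r}^{(\ell)}\in\{-1,1\}^n$ and $\boldsymbol{\Omega}^{(\ell)}=\operatorname{diag}(\mathbf{r}^{(\ell)})$. Let $$\mathbf{P}=\big[\mathbf{A}^\top\boldsymbol{\Omega}^{(1)}\,|\,\cdots\,|\,\mathbf{A}^\top\boldsymbol{\Omega}^{(m)}\big]^\top\in\mathbb{R}^{mn\times d}$$ be the constraint matrix of the one-bit polyhedron associated with $\mathbf{A}\mathbf{x}=\mathbf{y}$. Then $\kappa(\mathbf{P})=\kappa(\mathbf{A})$.
   Context: Scaled condition number $\kappa(\mathbf{C})=\|\mathbf{C}\|_{\mathrm F}\|\mathbf{C}^\dagger\|_2$ ($\mathbf{C}^\dagger$ the Moore–Penrose pseudoinverse, $\|\cdot\|_2$ the spectral norm). *)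

theory Defs
  imports "HOL-Analysis.Analysis"
begin

definition frob_norm :: "real^'c^'r \<Rightarrow> real" where
  "frob_norm C = sqrt (\<Sum>i\<in>UNIV. \<Sum>j\<in>UNIV. (C $ i $ j)^2)"

definition spec_norm :: "real^'c^'r \<Rightarrow> real" where
  "spec_norm C = onorm (\<lambda>x. C *v x)"

text \<open>Moore--Penrose pseudoinverse, via the four Penrose conditions.\<close>
definition is_pinv :: "real^'c^'r \<Rightarrow> real^'r^'c \<Rightarrow> bool" where
  "is_pinv C B \<longleftrightarrow> C ** B ** C = C \<and> B ** C ** B = B \<and>
     transpose (C ** B) = C ** B \<and> transpose (B ** C) = B ** C"

definition pinv :: "real^'c^'r \<Rightarrow> real^'r^'c" where
  "pinv C = (THE B. is_pinv C B)"

definition scaled_cond :: "real^'c^'r \<Rightarrow> real" where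
  "scaled_cond C = frob_norm C * spec_norm (pinv C)"

definition diag_mat :: "real^'n \<Rightarrow> real^'n^'n" where
  "diag_mat r = (\<chi> i j. if i = j then r $ i else 0)"

end

theory Submission
  imports Defs
begin

lemma range_factor:
  fixes M :: "real^'a^'r" and N :: "real^'b^'r"
  assumes "\<And>y. \<exists>z. M *v y = N *v z"
  shows "\<exists>X. M = N ** X"
proof -
  obtain h where h: "\<And>y. M *v y = N *v h y" using assms by metis
  define X :: "real^'a^'b" where "X = (\<chi> k j. h (axis j 1) $ k)"
  have "M = N ** X"
  proof (rule vec_eq_iff[THEN iffD2], intro allI, rule vec_eq_iff[THEN iffD2], intro allI)
    fix i j
    have "M $ i $ j = (M *v axis j 1) $ i"
      by (simp add: matrix_vector_mult_def axis_def if_distrib cong: if_cong)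
    also have "\<dots> = (N *v h (axis j 1)) $ i" by (simp add: h)
    also have "\<dots> = (N ** X) $ i $ j"
      by (simp add: matrix_vector_mult_def matrix_matrix_mult_def X_def)
    finally show "M $ i $ j = (N ** X) $ i $ j" .
  qed
  then show ?thesis by blast
qed

lemma left_inv_range:
  fixes C :: "real^'c^'r"
  shows "\<exists>G X. G ** C ** transpose C = transpose C \<and> G = transpose C ** X"
proof -
  let ?S = "range (\<lambda>y. transpose C *v y)"
  have sub: "subspace ?S"
    by (rule linear_subspace_image[OF matrix_vector_mul_linear subspace_UNIV])
  have sp: "span ?S = ?S" using sub by (simp add: span_eq_iff)
  have inj: "inj_on (\<lambda>x. C *v x) (span ?S)"
  proof (rule inj_onI)
    fix x y assume x: "x \<in> span ?S" and y: "y \<in> span ?S" and e: "C *v x = C *v y"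
    have "x - y \<in> ?S" using x y sub sp by (metis subspace_diff)
    then obtain z where z: "x - y = transpose C *v z" by blast
    have "C *v (x - y) = 0" using e by (simp add: matrix_vector_mult_diff_distrib)
    then have "inner (x - y) (x - y) = 0"
      using z dot_lmul_matrix[of z C "x - y"] by (simp add: vector_transpose_matrix)
    then show "x = y" by simp
  qed
  obtain g where g: "range g \<subseteq> span ?S" "linear g" "\<forall>x\<in>span ?S. g (C *v x) = x"
    using linear_inj_on_left_inverse[OF matrix_vector_mul_linear inj] by blast
  define G where "G = matrix g"
  have gG: "g y = G *v y" for y using g(2) unfolding G_def by (metis matrix_vector_mul(2))
  have 1: "G ** C ** transpose C = transpose C"
    unfolding matrix_eq
  proof
    fix v
    have "transpose C *v v \<in> span ?S" by (metis rangeI sp)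
    then show "(G ** C ** transpose C) *v v = transpose C *v v"
      using g(3) gG \<open>transpose C *v v \<in> span ?S\<close> by (simp add: matrix_vector_mul_assoc[symmetric])
  qed
  have "\<exists>z. G *v y = transpose C *v z" for y
  proof -
    have "g y \<in> ?S" using g(1) sp by blast
    then show ?thesis using gG by auto
  qed
  then obtain X where "G = transpose C ** X" using range_factor by blast
  with 1 show ?thesis by blast
qed

lemma pinv_unique:
  fixes C :: "real^'c^'r"
  assumes "is_pinv C B1" "is_pinv C B2"
  shows "B1 = B2"
proof -
  have a: "C ** B1 ** C = C" "B1 ** C ** B1 = B1" "transpose (C ** B1) = C ** B1"
    "transpose (B1 ** C) = B1 ** C" using assms(1) unfolding is_pinv_def by auto
  have b: "C ** B2 ** C = C" "B2 ** C ** B2 = B2" "transpose (C ** B2) = C ** B2"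
    "transpose (B2 ** C) = B2 ** C" using assms(2) unfolding is_pinv_def by auto
  have l: "B1 ** C = B2 ** C"
  proof -
    have "B1 ** C = transpose (B1 ** C)" using a by simp
    also have "\<dots> = transpose C ** transpose B1" by (simp add: matrix_transpose_mul)
    also have "\<dots> = transpose (C ** B2 ** C) ** transpose B1" using b by simp
    also have "\<dots> = transpose (B2 ** C) ** transpose (B1 ** C)"
      by (simp add: matrix_transpose_mul matrix_mul_assoc)
    also have "\<dots> = B2 ** C ** B1 ** C" using a b by (simp add: matrix_mul_assoc)
    also have "\<dots> = B2 ** C" using a by (simp add: matrix_mul_assoc[symmetric])
    finally show ?thesis .
  qed
  have r: "C ** B1 = C ** B2"
  proof -
    have "C ** B1 = transpose (C ** B1)" using a by simp
    also have "\<dots> = transpose B1 ** transpose C" by (simp add: matrix_transpose_mul)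
    also have "\<dots> = transpose B1 ** transpose (C ** B2 ** C)" using b by simp
    also have "\<dots> = transpose (C ** B1) ** transpose (C ** B2)"
      by (simp add: matrix_transpose_mul matrix_mul_assoc)
    also have "\<dots> = C ** B1 ** C ** B2" using a b by (simp add: matrix_mul_assoc)
    also have "\<dots> = C ** B2" using a by (simp add: matrix_mul_assoc)
    finally show ?thesis .
  qed
  have "B1 = B1 ** C ** B1" using a by simp
  also have "\<dots> = B2 ** C ** B2" using l r by (metis matrix_mul_assoc)
  also have "\<dots> = B2" using b by simp
  finally show ?thesis .
qed

lemma pinv_exists:
  fixes C :: "real^'c^'r"
  shows "\<exists>B. is_pinv C B"
proof -
  obtain G X where G: "G ** C ** transpose C = transpose C" and X: "G = transpose C ** X"
    using left_inv_range by blast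
  obtain G' Y where G': "G' ** transpose C ** C = C" and Y: "G' = C ** Y"
    using left_inv_range[of "transpose C"] by (auto simp: transpose_transpose)
  define PS where "PS = G ** C"
  define PW where "PW = G' ** transpose C"
  have "PS ** transpose PS = transpose PS"
    unfolding PS_def using G by (metis matrix_mul_assoc matrix_transpose_mul)
  then have PSs: "transpose PS = PS"
    by (metis matrix_transpose_mul transpose_transpose)
  have "PW ** transpose PW = transpose PW"
    unfolding PW_def using G' by (metis matrix_mul_assoc matrix_transpose_mul transpose_transpose)
  then have PWs: "transpose PW = PW"
    by (metis matrix_transpose_mul transpose_transpose)
  have CPS: "C ** PS = C"
  proof -
    have "C ** PS = transpose (transpose PS ** transpose C)"
      by (simp add: matrix_transpose_mul transpose_transpose)
    also have "\<dots> = C" using PSs G unfolding PS_def by (simp add: transpose_transpose)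
    finally show ?thesis .
  qed
  have PWC: "PW ** C = C"
  proof -
    have "PW ** C = transpose (transpose C ** transpose PW)"
      by (simp add: matrix_transpose_mul transpose_transpose)
    also have "\<dots> = transpose (transpose C ** PW)" using PWs by simp
    also have "transpose C ** PW = transpose C"
    proof -
      have "transpose C ** PW = transpose (transpose PW ** C)"
        by (simp add: matrix_transpose_mul transpose_transpose)
      also have "\<dots> = transpose C" using PWs G' unfolding PW_def by simp
      finally show ?thesis .
    qed
    finally show ?thesis by (simp add: transpose_transpose)
  qed
  define B where "B = G ** PW"
  have GCG: "G ** C ** G = G" using G X by (metis matrix_mul_assoc)
  have CGPW: "C ** G ** PW = PW"
  proof -
    have "C ** G ** PW = (C ** PS) ** Y ** transpose C"
      unfolding PW_def PS_def Y by (simp add: matrix_mul_assoc)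
    also have "\<dots> = PW" using CPS unfolding PW_def Y by (simp add: matrix_mul_assoc)
    finally show ?thesis .
  qed
  have 1: "C ** B ** C = C" unfolding B_def using PWC CPS unfolding PS_def by (simp add: matrix_mul_assoc[symmetric])
  have GPWC: "G ** PW ** C = G ** C" by (metis PWC matrix_mul_assoc)
  have 2: "B ** C ** B = B" unfolding B_def using GPWC GCG by (simp add: matrix_mul_assoc)
  have 3: "transpose (C ** B) = C ** B" unfolding B_def using CGPW PWs by (simp add: matrix_mul_assoc)
  have 4: "transpose (B ** C) = B ** C" unfolding B_def using GPWC PSs unfolding PS_def by (simp add: matrix_mul_assoc)
  show ?thesis using 1 2 3 4 unfolding is_pinv_def by blast
qed

lemma is_pinv_pinv: "is_pinv C (pinv C)"
  unfolding pinv_def using pinv_exists pinv_unique by (metis theI)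

lemma pinv_eqI: "is_pinv C B \<Longrightarrow> pinv C = B"
  using is_pinv_pinv pinv_unique by blast

lemma sum_UNIV_prod:
  "(\<Sum>k\<in>(UNIV::('a::finite \<times> 'b::finite) set). f k) = (\<Sum>l\<in>UNIV. \<Sum>i\<in>UNIV. f (l, i))"
  by (metis UNIV_Times_UNIV sum.cartesian_product')

lemma norm_sq_vec: "(norm (x::real^'n))^2 = (\<Sum>i\<in>UNIV. (x $ i)^2)"
  unfolding power2_norm_eq_inner inner_vec_def by (simp add: power2_eq_square)

lemma ifm: "(if P then a else 0) * (b::real) = (if P then a * b else 0)" by simp
lemma ifm2: "(b::real) * (if P then a else 0) = (if P then b * a else 0)" by simp

lemma diag_mul_entry: "(diag_mat v ** A) $ i $ j = v $ i * A $ i $ j"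
  by (simp add: diag_mat_def matrix_matrix_mult_def ifm ifm2)

theorem theorem8:
  fixes A :: "real^'d^'n" and r :: "'m::finite \<Rightarrow> real^'n"
    and P :: "real^'d^('m \<times> 'n)"
  assumes "A \<noteq> 0"
    and "\<And>l i. r l $ i \<in> {-1, 1}"
    and "P = (\<chi> k. (diag_mat (r (fst k)) ** A) $ snd k)"
  shows "scaled_cond P = scaled_cond A"
proof -
  have r2: "(r l $ i)^2 = 1" for l i using assms(2)[of l i] by auto
  define c where "c = real CARD('m)"
  have cpos: "c > 0" unfolding c_def by simp
  have Pe: "P $ k $ j = r (fst k) $ snd k * A $ snd k $ j" for k j
    using assms(3) by (simp add: diag_mul_entry)
  define R :: "real^('m \<times> 'n)^'n" where "R = (\<chi> i k. if snd k = i then r (fst k) $ i else 0)"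
  have PR: "P = transpose R ** A"
    by (simp add: vec_eq_iff Pe R_def transpose_def matrix_matrix_mult_def ifm ifm2)
  have RRt: "R ** transpose R = c *\<^sub>R mat 1"
  proof -
    have "(R ** transpose R) $ i $ i' = (c *\<^sub>R mat 1 :: real^'n^'n) $ i $ i'" for i i'
    proof -
      have "(R ** transpose R) $ i $ i' = (\<Sum>l\<in>UNIV. \<Sum>i''\<in>UNIV. R $ i $ (l, i'') * R $ i' $ (l, i''))"
        by (simp add: matrix_matrix_mult_def transpose_def sum_UNIV_prod)
      also have "\<dots> = (\<Sum>l\<in>(UNIV::'m set). if i = i' then 1 else 0)"
        using r2 by (simp add: R_def ifm ifm2 power2_eq_square)
      also have "\<dots> = (c *\<^sub>R mat 1 :: real^'n^'n) $ i $ i'"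
        by (simp add: c_def mat_def)
      finally show ?thesis .
    qed
    then show ?thesis by (simp add: vec_eq_iff)
  qed
  define B where "B = pinv A"
  have pB: "is_pinv A B" unfolding B_def by (rule is_pinv_pinv)
  define BP where "BP = (1 / c) *\<^sub>R (B ** R)"
  have BPP: "BP ** P = B ** A"
  proof -
    have "BP ** P = (1 / c) *\<^sub>R (B ** (R ** transpose R) ** A)"
      unfolding BP_def PR by (simp add: matrix_mul_assoc scalar_matrix_assoc)
    also have "\<dots> = B ** A" using cpos
      by (simp add: RRt matrix_scalar_ac scalar_matrix_assoc[symmetric])
    finally show ?thesis .
  qed
  have PBP: "P ** BP = (1 / c) *\<^sub>R (transpose R ** (A ** B) ** R)"
    unfolding BP_def PR by (simp add: matrix_mul_assoc matrix_scalar_ac scalar_matrix_assoc[symmetric])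
  have pBP: "is_pinv P BP"
  proof -
    have a: "A ** B ** A = A" "B ** A ** B = B" "transpose (A ** B) = A ** B"
      "transpose (B ** A) = B ** A" using pB unfolding is_pinv_def by auto
    have 1: "P ** BP ** P = P"
      by (metis BPP PR a(1) matrix_mul_assoc)
    have 2: "BP ** P ** BP = BP"
    proof -
      have "BP ** P ** BP = B ** A ** BP" by (simp add: BPP)
      also have "\<dots> = (1 / c) *\<^sub>R (B ** A ** (B ** R))" unfolding BP_def
        by (simp add: matrix_scalar_ac scalar_matrix_assoc[symmetric])
      also have "\<dots> = BP" unfolding BP_def
        by (simp add: matrix_mul_assoc a(2))
      finally show ?thesis .
    qed
    have 3: "transpose (P ** BP) = P ** BP"
      unfolding PBP using a(3) by (simp add: transpose_scalar matrix_transpose_mul transpose_transpose matrix_mul_assoc)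
    have 4: "transpose (BP ** P) = BP ** P" using a(4) BPP by simp
    show ?thesis using 1 2 3 4 unfolding is_pinv_def by blast
  qed
  have pinvP: "pinv P = BP" using pBP by (rule pinv_eqI)
  have frob: "frob_norm P = sqrt c * frob_norm A"
  proof -
    have "(\<Sum>k\<in>UNIV. \<Sum>j\<in>UNIV. (P $ k $ j)^2) = (\<Sum>l\<in>(UNIV::'m set). \<Sum>i\<in>UNIV. \<Sum>j\<in>UNIV. (A $ i $ j)^2)"
      by (simp add: sum_UNIV_prod Pe power_mult_distrib r2)
    also have "\<dots> = c * (\<Sum>i\<in>UNIV. \<Sum>j\<in>UNIV. (A $ i $ j)^2)" by (simp add: c_def)
    finally show ?thesis unfolding frob_norm_def by (simp add: real_sqrt_mult)
  qed
  have Rx: "norm (R *v x) \<le> sqrt c * norm x" for x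
  proof -
    have "(norm (R *v x))^2 = (\<Sum>i\<in>UNIV. (\<Sum>l\<in>UNIV. r l $ i * x $ (l, i))^2)"
      unfolding norm_sq_vec
      by (simp add: matrix_vector_mult_def R_def sum_UNIV_prod ifm ifm2)
    also have "\<dots> \<le> (\<Sum>i\<in>UNIV. c * (\<Sum>l\<in>UNIV. (x $ (l, i))^2))"
    proof (rule sum_mono)
      fix i
      have "(\<Sum>l\<in>UNIV. r l $ i * x $ (l, i))^2 \<le> (\<Sum>l\<in>UNIV. (r l $ i)^2) * (\<Sum>l\<in>UNIV. (x $ (l, i))^2)"
        by (rule Cauchy_Schwarz_ineq_sum)
      then show "(\<Sum>l\<in>UNIV. r l $ i * x $ (l, i))^2 \<le> c * (\<Sum>l\<in>UNIV. (x $ (l, i))^2)"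
        by (simp add: r2 c_def)
    qed
    also have "\<dots> = c * (\<Sum>i\<in>UNIV. \<Sum>l\<in>UNIV. (x $ (l, i))^2)"
      by (simp add: sum_distrib_left)
    also have "\<dots> = c * (norm x)^2"
      unfolding norm_sq_vec sum_UNIV_prod by (rule arg_cong[where f="\<lambda>t. c * t"], rule sum.swap)
    also have "\<dots> = (sqrt c * norm x)^2" using cpos by (simp only: power_mult_distrib real_sqrt_pow2 less_imp_le)
    finally have "(norm (R *v x))^2 \<le> (sqrt c * norm x)^2" .
    then show ?thesis by (rule power2_le_imp_le) (use cpos in simp)
  qed
  have RRty: "R *v (transpose R *v y) = c *\<^sub>R y" for y
  proof -
    have "R *v (transpose R *v y) = (R ** transpose R) *v y" by (rule matrix_vector_mul_assoc)
    also have "\<dots> = c *\<^sub>R y" unfolding RRt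
      by (simp add: scaleR_matrix_vector_assoc[symmetric])
    finally show ?thesis .
  qed
  have Rty: "norm (transpose R *v y) \<le> sqrt c * norm y" for y
  proof -
    have e: "R *v (transpose R *v y) = c *\<^sub>R y" by (rule RRty)
    have "True"
    proof -
      have "R *v (transpose R *v y) = (R ** transpose R) *v y" by (rule matrix_vector_mul_assoc)
      also have "\<dots> = c *\<^sub>R y" unfolding RRt
        by (simp add: scaleR_matrix_vector_assoc[symmetric])
      finally show True by simp
    qed
    have "(norm (transpose R *v y))^2 = inner (transpose R *v y) (transpose R *v y)"
      by (rule power2_norm_eq_inner)
    also have "\<dots> = inner y (R *v (transpose R *v y))"
      by (metis dot_lmul_matrix transpose_matrix_vector)
    also have "\<dots> = c * (norm y)^2"
      unfolding e by (simp add: power2_norm_eq_inner)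
    also have "\<dots> = (sqrt c * norm y)^2" using cpos by (simp only: power_mult_distrib real_sqrt_pow2 less_imp_le)
    finally have "(norm (transpose R *v y))^2 \<le> (sqrt c * norm y)^2" by (rule eq_refl)
    then show ?thesis by (rule power2_le_imp_le) (use cpos in simp)
  qed
  have up: "spec_norm BP \<le> spec_norm B / sqrt c"
    unfolding spec_norm_def
  proof (rule onorm_le)
    fix x
    have "norm (BP *v x) = (1 / c) * norm (B *v (R *v x))"
      using cpos by (simp add: BP_def scaleR_matrix_vector_assoc[symmetric] matrix_vector_mul_assoc)
    also have "\<dots> \<le> (1 / c) * (onorm ((*v) B) * norm (R *v x))"
      using cpos by (intro mult_left_mono onorm matrix_vector_mul_bounded_linear) auto
    also have "\<dots> \<le> (1 / c) * (onorm ((*v) B) * (sqrt c * norm x))"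
      using cpos Rx onorm_pos_le[OF matrix_vector_mul_bounded_linear]
      by (intro mult_left_mono) auto
    also have "\<dots> = onorm ((*v) B) / sqrt c * norm x"
    proof -
      obtain s where s: "s = sqrt c" by simp
      have cs: "c = s * s" "s > 0" using cpos s by auto
      show ?thesis unfolding s[symmetric] using cs by (simp add: field_simps)
    qed
    finally show "norm (BP *v x) \<le> onorm ((*v) B) / sqrt c * norm x" .
  qed
  have lo: "spec_norm B \<le> spec_norm BP * sqrt c"
    unfolding spec_norm_def
  proof (rule onorm_le)
    fix y
    have "BP *v (transpose R *v y) = (1 / c) *\<^sub>R (B *v (R *v (transpose R *v y)))"
      unfolding BP_def by (simp only: scaleR_matrix_vector_assoc[symmetric] matrix_vector_mul_assoc[symmetric])
    also have "\<dots> = B *v y" using cpos unfolding RRty by (simp add: matrix_vector_mult_scaleR)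
    finally have "B *v y = BP *v (transpose R *v y)" by simp
    then have "norm (B *v y) = norm (BP *v (transpose R *v y))" by simp
    also have "\<dots> \<le> onorm ((*v) BP) * norm (transpose R *v y)"
      by (intro onorm matrix_vector_mul_bounded_linear)
    also have "\<dots> \<le> onorm ((*v) BP) * (sqrt c * norm y)"
      using Rty onorm_pos_le[OF matrix_vector_mul_bounded_linear] by (intro mult_left_mono) auto
    finally show "norm (B *v y) \<le> onorm ((*v) BP) * sqrt c * norm y" by (simp add: mult.assoc)
  qed
  have sp: "spec_norm BP = spec_norm B / sqrt c"
  proof -
    have "spec_norm BP * sqrt c = spec_norm B" using up lo cpos by (simp add: pos_le_divide_eq)
    then show ?thesis using cpos by (simp add: eq_divide_eq)
  qed
  show ?thesis
    unfolding scaled_cond_def pinvP frob sp B_def[symmetric] using cpos by simp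
qed

end
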